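(* Let $d\ge1$, let $\Phi$ be a Young function and let $1<p_1<q_\Phi\le p_\Phi<p_2<\infty$. Then there exists a Young function $\Psi$ with $L^\Psi(\mathbb R^d)=L^\Phi(\mathbb R^d)$, $q_\Psi\le p_1$ and $p_\Psi\ge p_2$.
   Context: A Young function is a convex function $\Phi:[0,\infty)\to[0,\infty)$ with $\Phi(0)=0$, $\Phi(t)>0$ for $t>0$, and $\lim_{t\to\infty}\Phi(t)=\infty$. $\Phi'$ denotes the right derivative of $\Phi$. The Lebesgue exponents of $\Phi$ are $p_\Phi=\sup_{t>0}\frac{t\Phi'(t)}{\Phi(t)}$ and $q_\Phi=\inf_{t>0}\frac{t\Phi'(t)}{\Phi(t)}$. For a measurable $f$ on $\mathbb R^d$, $\rho_\Phi(f)=\int_{\mathbb R^d}\Phi(|f(x)|)\,dx$, the Luxemburg norm is $\|f\|_{L^\Phi}=\inf\{\lambda>0:\rho_\Phi(f/\lambda)\le1\}$, and the Orlicz space $L^\Phi(\mathbb R^d)$ consists of (classes of) measurable $f$ with $\|f\|_{L^\Phi}<\infty$. *)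

theory Defs
  imports "HOL-Analysis.Analysis"
begin

definition young_function :: "(real \<Rightarrow> real) \<Rightarrow> bool" where
  "young_function \<Phi> \<longleftrightarrow>
     convex_on {0..} \<Phi> \<and> \<Phi> 0 = 0 \<and> (\<forall>t>0. \<Phi> t > 0) \<and> filterlim \<Phi> at_top at_top"

definition right_deriv :: "(real \<Rightarrow> real) \<Rightarrow> real \<Rightarrow> real" where
  "right_deriv \<Phi> t = Lim (at_right 0) (\<lambda>h. (\<Phi> (t + h) - \<Phi> t) / h)"

definition upper_exponent :: "(real \<Rightarrow> real) \<Rightarrow> ereal" where
  "upper_exponent \<Phi> = (SUP t\<in>{0<..}. ereal (t * right_deriv \<Phi> t / \<Phi> t))"

definition lower_exponent :: "(real \<Rightarrow> real) \<Rightarrow> ereal" where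
  "lower_exponent \<Phi> = (INF t\<in>{0<..}. ereal (t * right_deriv \<Phi> t / \<Phi> t))"

text \<open>Modular, Luxemburg norm and Orlicz space on R^d (d = CARD('n)).\<close>
definition modular :: "(real \<Rightarrow> real) \<Rightarrow> (real ^ 'n \<Rightarrow> real) \<Rightarrow> ennreal" where
  "modular \<Phi> f = (\<integral>\<^sup>+ x. ennreal (\<Phi> \<bar>f x\<bar>) \<partial>lebesgue)"

definition luxemburg_norm :: "(real \<Rightarrow> real) \<Rightarrow> (real ^ 'n \<Rightarrow> real) \<Rightarrow> ereal" where
  "luxemburg_norm \<Phi> f = Inf {ereal l | l. l > 0 \<and> modular \<Phi> (\<lambda>x. f x / l) \<le> 1}"

definition orlicz_space :: "(real \<Rightarrow> real) \<Rightarrow> (real ^ 'n \<Rightarrow> real) set" where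
  "orlicz_space \<Phi> = {f. f \<in> borel_measurable lebesgue \<and> luxemburg_norm \<Phi> f < \<infinity>}"

end

theory Submission
  imports Defs
begin

lemma conv_scale:
  assumes "convex_on {0..} \<Phi>" "\<Phi> 0 = 0" "0 \<le> s" "s \<le> 1" "0 \<le> y"
  shows "\<Phi> (s * y) \<le> s * \<Phi> y"
proof -
  have "\<Phi> ((1 - s) *\<^sub>R 0 + s *\<^sub>R y) \<le> (1 - s) * \<Phi> 0 + s * \<Phi> y"
    using convex_onD[OF assms(1), of s 0 y] assms by auto
  then show ?thesis using assms by simp
qed

lemma orlicz_sub:
  assumes "\<And>y. 0 \<le> y \<Longrightarrow> \<Phi> y \<le> \<Psi> y" "C > 0"
  shows "(orlicz_space \<Psi> :: (real ^ 'n \<Rightarrow> real) set) \<subseteq> orlicz_space \<Phi>"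
proof
  fix f :: "real ^ 'n \<Rightarrow> real"
  assume "f \<in> orlicz_space \<Psi>"
  then have m: "f \<in> borel_measurable lebesgue" and "luxemburg_norm \<Psi> f < \<infinity>"
    unfolding orlicz_space_def by auto
  then have "{ereal l | l. l > 0 \<and> modular \<Psi> (\<lambda>x. f x / l) \<le> 1} \<noteq> {}"
  proof (intro notI)
    assume "{ereal l | l. l > 0 \<and> modular \<Psi> (\<lambda>x. f x / l) \<le> 1} = {}"
    then have "luxemburg_norm \<Psi> f = top" unfolding luxemburg_norm_def by (simp only: Inf_empty)
    with \<open>luxemburg_norm \<Psi> f < \<infinity>\<close> show False by (simp add: top_ereal_def)
  qed
  then obtain l where l: "l > 0" "modular \<Psi> (\<lambda>x. f x / l) \<le> 1" by auto
  have "modular \<Phi> (\<lambda>x. f x / l) \<le> modular \<Psi> (\<lambda>x. f x / l)"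
    unfolding modular_def by (intro nn_integral_mono) (simp add: assms(1) ennreal_leI)
  with l have "ereal l \<in> {ereal l | l. l > 0 \<and> modular \<Phi> (\<lambda>x. f x / l) \<le> 1}" by auto
  then have "luxemburg_norm \<Phi> f \<le> ereal l" unfolding luxemburg_norm_def by (rule Inf_lower)
  then have "luxemburg_norm \<Phi> f < \<infinity>" by (rule le_less_trans) simp
  with m show "f \<in> orlicz_space \<Phi>" unfolding orlicz_space_def by auto
qed

lemma orlicz_sub2:
  assumes "\<And>y. 0 \<le> y \<Longrightarrow> \<Psi> (y / C) \<le> \<Phi> y" "C > 0"
  shows "(orlicz_space \<Phi> :: (real ^ 'n \<Rightarrow> real) set) \<subseteq> orlicz_space \<Psi>"
proof
  fix f :: "real ^ 'n \<Rightarrow> real"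
  assume "f \<in> orlicz_space \<Phi>"
  then have m: "f \<in> borel_measurable lebesgue" and "luxemburg_norm \<Phi> f < \<infinity>"
    unfolding orlicz_space_def by auto
  then have "{ereal l | l. l > 0 \<and> modular \<Phi> (\<lambda>x. f x / l) \<le> 1} \<noteq> {}"
  proof (intro notI)
    assume "{ereal l | l. l > 0 \<and> modular \<Phi> (\<lambda>x. f x / l) \<le> 1} = {}"
    then have "luxemburg_norm \<Phi> f = top" unfolding luxemburg_norm_def by (simp only: Inf_empty)
    with \<open>luxemburg_norm \<Phi> f < \<infinity>\<close> show False by (simp add: top_ereal_def)
  qed
  then obtain l where l: "l > 0" "modular \<Phi> (\<lambda>x. f x / l) \<le> 1" by auto
  have "modular \<Psi> (\<lambda>x. f x / (l * C)) \<le> modular \<Phi> (\<lambda>x. f x / l)"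
    unfolding modular_def
  proof (intro nn_integral_mono ennreal_leI)
    fix x
    have eq: "\<bar>f x / (l * C)\<bar> = \<bar>f x / l\<bar> / C" using l assms(2) by (simp add: abs_divide)
    have "\<Psi> (\<bar>f x / l\<bar> / C) \<le> \<Phi> \<bar>f x / l\<bar>" by (rule assms(1)) simp
    then show "\<Psi> \<bar>f x / (l * C)\<bar> \<le> \<Phi> \<bar>f x / l\<bar>" unfolding eq .
  qed
  then have m1: "modular \<Psi> (\<lambda>x. f x / (l * C)) \<le> 1" using l(2) by (rule order_trans)
  have lC: "l * C > 0" using l(1) assms(2) by simp
  have "ereal (l * C) \<in> {ereal l | l. l > 0 \<and> modular \<Psi> (\<lambda>x. f x / l) \<le> 1}"
    using lC m1 by blast
  then have "luxemburg_norm \<Psi> f \<le> ereal (l * C)" unfolding luxemburg_norm_def by (rule Inf_lower)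
  then have "luxemburg_norm \<Psi> f < \<infinity>" by (rule le_less_trans) simp
  with m show "f \<in> orlicz_space \<Psi>" unfolding orlicz_space_def by auto
qed

lemma rd_eq:
  assumes "\<And>h. 0 < h \<Longrightarrow> h \<le> 1 \<Longrightarrow> \<Psi> (t + h) = \<Psi> t + a * h"
  shows "right_deriv \<Psi> t = a"
proof -
  have "eventually (\<lambda>h. (\<Psi> (t + h) - \<Psi> t) / h = a) (at_right (0::real))"
    unfolding eventually_at_right_field
    by (rule exI[of _ 1]) (auto simp: assms)
  then have "((\<lambda>h. (\<Psi> (t + h) - \<Psi> t) / h) \<longlongrightarrow> a) (at_right 0)"
    by (rule tendsto_eventually)
  then show ?thesis unfolding right_deriv_def
    by (intro tendsto_Lim) (auto simp: trivial_limit_at_right_real)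
qed


lemma ramp_rd:
  fixes \<Phi> :: "real \<Rightarrow> real"
  assumes cvx: "convex_on {0..} \<Phi>" and p: "p > 1" and t: "t = p / (p - 1)" and a: "a > 0"
    and M: "max (\<Phi> t) (\<Phi> (t + 1)) \<le> a * (t - 1)"
  shows "t * right_deriv (\<lambda>t. max (\<Phi> t) (a * max 0 (t - 1))) t
           / (\<lambda>t. max (\<Phi> t) (a * max 0 (t - 1))) t = p"
proof -
  let ?P = "\<lambda>t. max (\<Phi> t) (a * max 0 (t - 1))"
  have t1: "t > 1" using p t by (simp add: pos_less_divide_eq)
  have cv: "convex_on {t..t+1} \<Phi>" using cvx by (rule convex_on_subset) (use t1 in auto)
  have loc: "?P s = a * (s - 1)" if "t \<le> s" "s \<le> t + 1" for s
  proof -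
    have "\<Phi> s \<le> max (\<Phi> t) (\<Phi> (t + 1))" using convex_on_le_max[OF cv] that by auto
    also have "\<dots> \<le> a * (t - 1)" by (rule M)
    also have "\<dots> \<le> a * (s - 1)" using a that by (intro mult_left_mono) auto
    finally show ?thesis using that t1 by auto
  qed
  have "right_deriv ?P t = a"
    by (rule rd_eq) (simp add: loc algebra_simps)
  moreover have "?P t = a * (t - 1)" by (rule loc) auto
  ultimately have "t * right_deriv ?P t / ?P t = t / (t - 1)" using a t1 by simp
  also have "\<dots> = p"
  proof -
    have "t - 1 = 1 / (p - 1)" using p t by (simp add: field_simps)
    then show ?thesis using p t by simp
  qed
  finally show ?thesis .
qed

theorem mainTheorem8:
  fixes \<Phi> :: "real \<Rightarrow> real" and p1 p2 :: real
  assumes "young_function \<Phi>"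
    and "1 < p1" and "ereal p1 < lower_exponent \<Phi>"
    and "lower_exponent \<Phi> \<le> upper_exponent \<Phi>"
    and "upper_exponent \<Phi> < ereal p2"
  shows "\<exists>\<Psi>. young_function \<Psi> \<and>
           (orlicz_space \<Psi> :: (real ^ 'n \<Rightarrow> real) set) = orlicz_space \<Phi> \<and>
           lower_exponent \<Psi> \<le> ereal p1 \<and> upper_exponent \<Psi> \<ge> ereal p2"
proof -
  have cvx: "convex_on {0..} \<Phi>" and Z: "\<Phi> 0 = 0" and pos: "\<And>t. t > 0 \<Longrightarrow> \<Phi> t > 0"
    and lim: "filterlim \<Phi> at_top at_top"
    using assms(1) unfolding young_function_def by auto
  have nn: "\<Phi> z \<ge> 0" if "z \<ge> 0" for z
    using pos[of z] Z that by (cases "z = 0") auto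
  have "lower_exponent \<Phi> < ereal p2" using assms(4,5) by (rule le_less_trans)
  with assms(3) have "ereal p1 < ereal p2" by (rule less_trans)
  then have p2: "p2 > 1" using assms(2) by simp
  define t1 where "t1 = p1 / (p1 - 1)"
  define t2 where "t2 = p2 / (p2 - 1)"
  have t1g: "t1 > 1" using assms(2) by (simp add: t1_def pos_less_divide_eq)
  have t2g: "t2 > 1" using p2 by (simp add: t2_def pos_less_divide_eq)
  define M where "M = max (max (\<Phi> t1) (\<Phi> (t1 + 1))) (max (\<Phi> t2) (\<Phi> (t2 + 1)))"
  have Mpos: "M > 0" using pos[of t1] t1g unfolding M_def by auto
  define a where "a = M / (t1 - 1) + M / (t2 - 1)"
  have apos: "a > 0" using Mpos t1g t2g unfolding a_def by (intro add_pos_pos divide_pos_pos) auto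
  have aM1: "max (\<Phi> t1) (\<Phi> (t1 + 1)) \<le> a * (t1 - 1)"
  proof -
    have "a * (t1 - 1) = M + M / (t2 - 1) * (t1 - 1)" using t1g unfolding a_def by (simp add: field_simps)
    also have "\<dots> \<ge> M" using Mpos t1g t2g by simp
    finally show ?thesis unfolding M_def by linarith
  qed
  have aM2: "max (\<Phi> t2) (\<Phi> (t2 + 1)) \<le> a * (t2 - 1)"
  proof -
    have "a * (t2 - 1) = M / (t1 - 1) * (t2 - 1) + M" using t2g unfolding a_def by (simp add: field_simps)
    also have "\<dots> \<ge> M" using Mpos t1g t2g by simp
    finally show ?thesis unfolding M_def by linarith
  qed
  define \<Psi> where "\<Psi> = (\<lambda>t. max (\<Phi> t) (a * max 0 (t - 1)))"
  have ge: "\<Phi> y \<le> \<Psi> y" for y unfolding \<Psi>_def by simp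
  have cvP: "convex_on {0..} \<Psi>"
    unfolding convex_on_def
  proof (intro conjI ballI allI impI)
    show "convex {0::real..}" by simp
    fix x y u v :: real
    assume xy: "x \<in> {0..}" "y \<in> {0..}" and uv: "0 \<le> u" "0 \<le> v" "u + v = 1"
    have "\<Phi> (u *\<^sub>R x + v *\<^sub>R y) \<le> u * \<Phi> x + v * \<Phi> y"
      using cvx xy uv unfolding convex_on_def by blast
    also have "\<dots> \<le> u * \<Psi> x + v * \<Psi> y"
      using uv ge by (intro add_mono mult_left_mono) auto
    finally have A: "\<Phi> (u *\<^sub>R x + v *\<^sub>R y) \<le> u * \<Psi> x + v * \<Psi> y" .
    have "max 0 (u * x + v * y - 1) \<le> u * max 0 (x - 1) + v * max 0 (y - 1)"
    proof -
      have "u * x + v * y - 1 = u * (x - 1) + v * (y - 1)" using uv by (simp add: algebra_simps)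
      also have "\<dots> \<le> u * max 0 (x - 1) + v * max 0 (y - 1)"
        using uv by (intro add_mono mult_left_mono) auto
      finally show ?thesis using uv by auto
    qed
    then have "a * max 0 (u * x + v * y - 1) \<le> a * (u * max 0 (x - 1) + v * max 0 (y - 1))"
      using apos by (intro mult_left_mono) auto
    also have "\<dots> = u * (a * max 0 (x - 1)) + v * (a * max 0 (y - 1))"
      by (simp add: algebra_simps)
    also have "\<dots> \<le> u * \<Psi> x + v * \<Psi> y"
      using uv unfolding \<Psi>_def by (intro add_mono mult_left_mono) auto
    finally have B: "a * max 0 (u * x + v * y - 1) \<le> u * \<Psi> x + v * \<Psi> y" .
    show "\<Psi> (u *\<^sub>R x + v *\<^sub>R y) \<le> u * \<Psi> x + v * \<Psi> y"
      using A B unfolding \<Psi>_def by simp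
  qed
  have young: "young_function \<Psi>"
    unfolding young_function_def
  proof (intro conjI allI impI)
    show "\<Psi> 0 = 0" using Z unfolding \<Psi>_def by simp
    show "\<Psi> t > 0" if "t > 0" for t using pos[OF that] ge[of t] by linarith
    show "filterlim \<Psi> at_top at_top"
      by (rule filterlim_at_top_mono[OF lim]) (simp add: ge)
  qed (rule cvP)
  define C where "C = 1 + a / \<Phi> 1"
  have P1: "\<Phi> 1 > 0" using pos by simp
  have Cg: "C \<ge> 1" using apos P1 unfolding C_def by simp
  have le: "\<Psi> z \<le> C * \<Phi> z" if z: "z \<ge> 0" for z
  proof -
    have "\<Phi> z \<le> C * \<Phi> z" using Cg nn[OF z] by (simp add: mult_le_cancel_right1)
    moreover have "a * max 0 (z - 1) \<le> C * \<Phi> z"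
    proof (cases "z \<le> 1")
      case True then show ?thesis using Cg nn[OF z] by simp
    next
      case False
      have "\<Phi> ((1 / z) * z) \<le> (1 / z) * \<Phi> z"
        using False by (intro conv_scale[OF cvx Z]) auto
      then have "z * \<Phi> 1 \<le> \<Phi> z" using False by (simp add: field_simps)
      then have "z \<le> \<Phi> z / \<Phi> 1" using P1 by (simp add: field_simps)
      then have "a * max 0 (z - 1) \<le> a * (\<Phi> z / \<Phi> 1)"
        using False apos by (intro mult_left_mono) auto
      also have "\<dots> \<le> C * \<Phi> z" unfolding C_def using nn[OF z] by (simp add: algebra_simps)
      finally show ?thesis .
    qed
    ultimately show ?thesis unfolding \<Psi>_def by simp
  qed
  have bk: "\<Psi> (y / C) \<le> \<Phi> y" if y: "y \<ge> 0" for y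
  proof -
    have "\<Psi> (y / C) \<le> C * \<Phi> ((1 / C) * y)" using le[of "y / C"] y Cg by simp
    also have "\<dots> \<le> C * ((1 / C) * \<Phi> y)"
    proof (rule mult_left_mono)
      show "\<Phi> ((1 / C) * y) \<le> (1 / C) * \<Phi> y"
        by (rule conv_scale[OF cvx Z]) (use Cg y in auto)
    qed (use Cg in simp)
    also have "\<dots> = \<Phi> y" using Cg by simp
    finally show ?thesis .
  qed
  have orl: "(orlicz_space \<Psi> :: (real ^ 'n \<Rightarrow> real) set) = orlicz_space \<Phi>"
  proof
    show "(orlicz_space \<Psi> :: (real ^ 'n \<Rightarrow> real) set) \<subseteq> orlicz_space \<Phi>"
      by (rule orlicz_sub[where C=1]) (auto simp: ge)
    show "(orlicz_space \<Phi> :: (real ^ 'n \<Rightarrow> real) set) \<subseteq> orlicz_space \<Psi>"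
      by (rule orlicz_sub2[where C=C]) (use bk Cg in auto)
  qed
  have r1: "t1 * right_deriv \<Psi> t1 / \<Psi> t1 = p1"
    unfolding \<Psi>_def by (rule ramp_rd[OF cvx assms(2) t1_def apos aM1])
  have r2: "t2 * right_deriv \<Psi> t2 / \<Psi> t2 = p2"
    unfolding \<Psi>_def by (rule ramp_rd[OF cvx p2 t2_def apos aM2])
  have "lower_exponent \<Psi> \<le> ereal (t1 * right_deriv \<Psi> t1 / \<Psi> t1)"
    unfolding lower_exponent_def by (rule INF_lower) (use t1g in auto)
  then have L: "lower_exponent \<Psi> \<le> ereal p1" using r1 by simp
  have "upper_exponent \<Psi> \<ge> ereal (t2 * right_deriv \<Psi> t2 / \<Psi> t2)"
    unfolding upper_exponent_def by (rule SUP_upper) (use t2g in auto)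
  then have U: "upper_exponent \<Psi> \<ge> ereal p2" using r2 by simp
  show ?thesis using young orl L U by blast
qed

end
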